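(* Let $\alpha,\beta\in\mathbb{R}$ and $\eta\in\{1,-1\}$, and let $G_4$ be the connected, simply connected Lie group whose Lie algebra $\mathfrak{g}_4$ has a basis $\{e_1,e_2,e_3\}$ with $[e_1,e_2]=-e_2+(2\eta-\beta)e_3$, $[e_1,e_3]=-\beta e_2+e_3$, $[e_2,e_3]=\alpha e_1$, equipped with the left-invariant Lorentzian metric $g$ for which $\{e_1,e_2,e_3\}$ is pseudo-orthonormal with $e_3$ timelike, and with the product structure $J$. Then $(G_4,g,J)$ is not an algebraic Schouten soliton associated to the Kobayashi–Nomizu connection $\nabla^1$: for no real numbers $\lambda_0,c$ does there exist a derivation $D$ of $\mathfrak{g}_4$ with $\widetilde{\mathrm{Ric}}^1=(s^1\lambda_0+c)\mathrm{Id}+D$.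
   Context: Pseudo-orthonormal means $g(e_1,e_1)=g(e_2,e_2)=1$, $g(e_3,e_3)=-1$, $g(e_i,e_j)=0$ for $i\neq j$; left-invariant tensors are identified with their values on $\mathfrak{g}$. $\nabla$ is the Levi-Civita connection of $g$. The product structure $J$ is the left-invariant endomorphism with $Je_1=e_1$, $Je_2=e_2$, $Je_3=-e_3$. The canonical connection is $\nabla^0_XY=\nabla_XY-\frac12(\nabla_XJ)JY$, and the Kobayashi–Nomizu connection is $\nabla^1_XY=\nabla^0_XY-\frac14[(\nabla_YJ)JX-(\nabla_{JY}J)X]$. For $k=0,1$: $R^k(X,Y)Z=\nabla^k_X\nabla^k_YZ-\nabla^k_Y\nabla^k_XZ-\nabla^k_{[X,Y]}Z$; $\rho^k(X,Y)=-g(R^k(X,e_1)Y,e_1)-g(R^k(X,e_2)Y,e_2)+g(R^k(X,e_3)Y,e_3)$; $\widetilde\rho^k(X,Y)=\frac12(\rho^k(X,Y)+\rho^k(Y,X))$; $\widetilde{\mathrm{Ric}}^k$ is defined by $\widetilde\rho^k(X,Y)=g(\widetilde{\mathrm{Ric}}^k(X),Y)$; and $s^k=\widetilde\rho^k(e_1,e_1)+\widetilde\rho^k(e_2,e_2)-\widetilde\rho^k(e_3,e_3)$. A derivation of $\mathfrak{g}$ is a linear map $D$ with $D[X,Y]=[DX,Y]+[X,DY]$. $(G,g,J)$ is an algebraic Schouten soliton associated to $\nabla^k$ (with real constants $\lambda_0,c$) if $\widetilde{\mathrm{Ric}}^k=(s^k\lambda_0+c)\mathrm{Id}+D$ for some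 derivation $D$. *)

theory Defs
  imports "HOL-Analysis.Analysis"
begin

text \<open>Three-dimensional real Lie algebras with a fixed basis e1, e2, e3, modelled
on real^3; e i is the i-th standard basis vector (indices (1::3), (2::3), (3::3)).  All tensors are left-invariant
and identified with their values on the Lie algebra.\<close>

definition e :: "3 \<Rightarrow> real^3" where
  "e i = axis i 1"

definition eps :: "3 \<Rightarrow> real" where
  "eps i = (if i = 3 then -1 else 1)"

definition gmet :: "real^3 \<Rightarrow> real^3 \<Rightarrow> real" where
  "gmet X Y = (\<Sum>i\<in>UNIV. eps i * X$i * Y$i)"

text \<open>Levi-Civita connection of a left-invariant metric via the Koszul formula
  2 g(LC X Y, Z) = g([X,Y],Z) - g([Y,Z],X) + g([Z,X],Y),
  solved using the pseudo-orthonormal basis.\<close>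
definition LC :: "(real^3 \<Rightarrow> real^3 \<Rightarrow> real^3) \<Rightarrow> real^3 \<Rightarrow> real^3 \<Rightarrow> real^3" where
  "LC br X Y = (\<Sum>k\<in>UNIV. (eps k * (1/2) *
      (gmet (br X Y) (e k) - gmet (br Y (e k)) X + gmet (br (e k) X) Y)) *\<^sub>R e k)"

definition Jps :: "real^3 \<Rightarrow> real^3" where
  "Jps X = (\<chi> i. if i = 3 then - (X$i) else X$i)"

definition nablaJ :: "(real^3 \<Rightarrow> real^3 \<Rightarrow> real^3) \<Rightarrow> real^3 \<Rightarrow> real^3 \<Rightarrow> real^3" where
  "nablaJ br X Y = LC br X (Jps Y) - Jps (LC br X Y)"

definition conn0 :: "(real^3 \<Rightarrow> real^3 \<Rightarrow> real^3) \<Rightarrow> real^3 \<Rightarrow> real^3 \<Rightarrow> real^3" where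
  "conn0 br X Y = LC br X Y - (1/2) *\<^sub>R nablaJ br X (Jps Y)"

definition conn1 :: "(real^3 \<Rightarrow> real^3 \<Rightarrow> real^3) \<Rightarrow> real^3 \<Rightarrow> real^3 \<Rightarrow> real^3" where
  "conn1 br X Y = conn0 br X Y
      - (1/4) *\<^sub>R (nablaJ br Y (Jps X) - nablaJ br (Jps Y) X)"

definition curv :: "(real^3 \<Rightarrow> real^3 \<Rightarrow> real^3) \<Rightarrow> (real^3 \<Rightarrow> real^3 \<Rightarrow> real^3)
    \<Rightarrow> real^3 \<Rightarrow> real^3 \<Rightarrow> real^3 \<Rightarrow> real^3" where
  "curv br nb X Y Z = nb X (nb Y Z) - nb Y (nb X Z) - nb (br X Y) Z"

definition ricci :: "(real^3 \<Rightarrow> real^3 \<Rightarrow> real^3) \<Rightarrow> (real^3 \<Rightarrow> real^3 \<Rightarrow> real^3)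
    \<Rightarrow> real^3 \<Rightarrow> real^3 \<Rightarrow> real" where
  "ricci br nb X Y = - gmet (curv br nb X (e 1) Y) (e 1) - gmet (curv br nb X (e 2) Y) (e 2)
      + gmet (curv br nb X (e 3) Y) (e 3)"

definition sym_ricci :: "(real^3 \<Rightarrow> real^3 \<Rightarrow> real^3) \<Rightarrow> (real^3 \<Rightarrow> real^3 \<Rightarrow> real^3)
    \<Rightarrow> real^3 \<Rightarrow> real^3 \<Rightarrow> real" where
  "sym_ricci br nb X Y = (1/2) * (ricci br nb X Y + ricci br nb Y X)"

text \<open>Ricci operator: g(RicOp X, Y) = sym_ricci(X,Y), solved in the pseudo-orthonormal basis\<close>
definition ric_op :: "(real^3 \<Rightarrow> real^3 \<Rightarrow> real^3) \<Rightarrow> (real^3 \<Rightarrow> real^3 \<Rightarrow> real^3)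
    \<Rightarrow> real^3 \<Rightarrow> real^3" where
  "ric_op br nb X = (\<Sum>k\<in>UNIV. (eps k * sym_ricci br nb X (e k)) *\<^sub>R e k)"

definition scal :: "(real^3 \<Rightarrow> real^3 \<Rightarrow> real^3) \<Rightarrow> (real^3 \<Rightarrow> real^3 \<Rightarrow> real^3) \<Rightarrow> real" where
  "scal br nb = sym_ricci br nb (e 1) (e 1) + sym_ricci br nb (e 2) (e 2)
      - sym_ricci br nb (e 3) (e 3)"

definition is_derivation :: "(real^3 \<Rightarrow> real^3 \<Rightarrow> real^3) \<Rightarrow> (real^3 \<Rightarrow> real^3) \<Rightarrow> bool" where
  "is_derivation br D \<longleftrightarrow> linear D \<and> (\<forall>X Y. D (br X Y) = br (D X) Y + br X (D Y))"

definition algebraic_schouten_soliton ::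
  "(real^3 \<Rightarrow> real^3 \<Rightarrow> real^3) \<Rightarrow> (real^3 \<Rightarrow> real^3 \<Rightarrow> real^3) \<Rightarrow> real \<Rightarrow> real \<Rightarrow> bool" where
  "algebraic_schouten_soliton br nb lam0 c \<longleftrightarrow>
     (\<exists>D. is_derivation br D \<and>
          (\<forall>X. ric_op br nb X = (scal br nb * lam0 + c) *\<^sub>R X + D X))"

definition bracket_of :: "(3 \<Rightarrow> 3 \<Rightarrow> real^3) \<Rightarrow> real^3 \<Rightarrow> real^3 \<Rightarrow> real^3" where
  "bracket_of b X Y = (\<Sum>i\<in>UNIV. \<Sum>j\<in>UNIV. (X$i * Y$j) *\<^sub>R b i j)"

definition g4_basis :: "real \<Rightarrow> real \<Rightarrow> real \<Rightarrow> 3 \<Rightarrow> 3 \<Rightarrow> real^3" where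
  "g4_basis alpha beta eta i j =
     (if i = 1 \<and> j = 2 then - e 2 + (2*eta - beta) *\<^sub>R e 3
      else if i = 2 \<and> j = 1 then e 2 - (2*eta - beta) *\<^sub>R e 3
      else if i = 1 \<and> j = 3 then - beta *\<^sub>R e 2 + e 3
      else if i = 3 \<and> j = 1 then beta *\<^sub>R e 2 - e 3
      else if i = 2 \<and> j = 3 then alpha *\<^sub>R e 1
      else if i = 3 \<and> j = 2 then - alpha *\<^sub>R e 1
      else 0)"

definition g4_bracket :: "real \<Rightarrow> real \<Rightarrow> real \<Rightarrow> real^3 \<Rightarrow> real^3 \<Rightarrow> real^3" where
  "g4_bracket alpha beta eta = bracket_of (g4_basis alpha beta eta)"

end

theory Submission
  imports Defs
begin

lemma e_comp: "e i $ j = (if j = i then 1 else 0)"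
  by (simp add: e_def axis_def)
lemma three_ne[simp]: "(1::3) \<noteq> 2" "(1::3) \<noteq> 3" "(2::3) \<noteq> 3" "(2::3) \<noteq> 1" "(3::3) \<noteq> 1" "(3::3) \<noteq> 2"
  by simp_all
lemma gmet_comp: "gmet X Y = X$1*Y$1 + X$2*Y$2 - X$3*Y$3"
  by (simp add: gmet_def sum_3 eps_def)
lemma br_comp:
  "g4_bracket a b n X Y $ 1 = a * (X$2*Y$3 - X$3*Y$2)"
  "g4_bracket a b n X Y $ 2 = -(X$1*Y$2 - X$2*Y$1) - b*(X$1*Y$3 - X$3*Y$1)"
  "g4_bracket a b n X Y $ 3 = (2*n-b)*(X$1*Y$2 - X$2*Y$1) + (X$1*Y$3 - X$3*Y$1)"
  by (simp_all add: g4_bracket_def bracket_of_def g4_basis_def sum_3 e_comp algebra_simps)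


lemma Jps_comp: "Jps X $ 1 = X$1" "Jps X $ 2 = X$2" "Jps X $ 3 = - X$3"
  by (simp_all add: Jps_def)

lemma LC_c:
  "LC (g4_bracket a b n) X Y $ 1 = -X$3*Y$3 - X$2*Y$2 - n*X$3*Y$2 - n*X$2*Y$3 - 1/2*a*X$3*Y$2 + 1/2*a*X$2*Y$3"
  "LC (g4_bracket a b n) X Y $ 2 = X$2*Y$1 + n*X$3*Y$1 + n*X$1*Y$3 - b*X$1*Y$3 + 1/2*a*X$3*Y$1 + 1/2*a*X$1*Y$3"
  "LC (g4_bracket a b n) X Y $ 3 = -X$3*Y$1 - n*X$2*Y$1 + n*X$1*Y$2 - b*X$1*Y$2 + 1/2*a*X$2*Y$1 + 1/2*a*X$1*Y$2"
  by (simp_all add: LC_def sum_3 e_comp gmet_comp br_comp eps_def algebra_simps)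

lemma nJ_c:
  "nablaJ (g4_bracket a b n) X Y $ 1 = 2*X$3*Y$3 + 2*n*X$2*Y$3 - a*X$2*Y$3"
  "nablaJ (g4_bracket a b n) X Y $ 2 = -2*n*X$1*Y$3 + 2*b*X$1*Y$3 - a*X$1*Y$3"
  "nablaJ (g4_bracket a b n) X Y $ 3 = -2*X$3*Y$1 - 2*n*X$2*Y$1 + 2*n*X$1*Y$2 - 2*b*X$1*Y$2 + a*X$2*Y$1 + a*X$1*Y$2"
  by (simp_all add: nablaJ_def LC_c Jps_comp algebra_simps)

lemma c1_c:
  "conn1 (g4_bracket a b n) X Y $ 1 = -X$2*Y$2 - a*X$3*Y$2"
  "conn1 (g4_bracket a b n) X Y $ 2 = X$2*Y$1 + b*X$3*Y$1"
  "conn1 (g4_bracket a b n) X Y $ 3 = X$1*Y$3"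
  by (simp_all add: conn1_def conn0_def nJ_c LC_c Jps_comp algebra_simps)


lemma ric_c:
  "ric_op (g4_bracket a b n) (conn1 (g4_bracket a b n)) (e 1) = (\<chi> i. if i = 1 then -1 + 2*b*n - b^2 else 0)"
  "ric_op (g4_bracket a b n) (conn1 (g4_bracket a b n)) (e 2) = (\<chi> i. if i = 1 then 0 else if i = 2 then -1 + 2*a*n - a*b else -a/2)"
  "ric_op (g4_bracket a b n) (conn1 (g4_bracket a b n)) (e 3) = (\<chi> i. if i = 2 then a/2 else 0)"
  unfolding vec_eq_iff forall_3
  by (simp_all add: ric_op_def sum_3 sym_ricci_def ricci_def curv_def gmet_comp c1_c br_comp e_comp eps_def algebra_simps power2_eq_square)

lemma scal_c: "scal (g4_bracket a b n) (conn1 (g4_bracket a b n)) = -2 + 2*b*n - b^2 + 2*a*n - a*b"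
  by (simp add: scal_def sym_ricci_def ricci_def curv_def gmet_comp c1_c br_comp e_comp algebra_simps power2_eq_square)


lemma key:
  fixes alpha beta eta k :: real
  assumes n: "eta = 1 \<or> eta = -1"
  and h1: "(2 * eta - beta) * alpha / 2 + alpha * beta =
      k + (1 + (beta\<^sup>2 + (3 * (alpha * beta) / 2 - 2 * beta * eta)))"
  and h2: "alpha - (2 * eta - beta) * k =
      (2 * eta - beta) * (2 * beta * eta - 1 - beta\<^sup>2 - k) +
      (2 * eta - beta) * (2 * alpha * eta - 1 - alpha * beta - k)"
  and h3: "alpha - beta * (2 * alpha * eta - 1 - alpha * beta - k) =
      beta * k - beta * (2 * beta * eta - 1 - beta\<^sup>2 - k)"
  and h5: "alpha * (2 * beta * eta - 1 - beta\<^sup>2 - k) =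
      alpha * (2 * alpha * eta - 1 - alpha * beta - k) - alpha * k"
  shows False
proof -
  have nn: "eta * eta = 1" using n by auto
  have kk: "k = -1 + 2*beta*eta - beta^2 + alpha*eta - alpha*beta"
    using h1 by algebra
  have g2: "alpha = (2*eta - beta) * (-1 + alpha*eta)"
    using h2 kk by algebra
  have g3: "alpha = beta * (-1 + 3*alpha*eta - 2*alpha*beta)"
    using h3 kk by algebra
  have g5: "alpha * (2*(-1 + 2*beta*eta - beta^2) + 1 - alpha*eta) = 0"
    using h5 kk by algebra
  show False
  proof (cases "alpha = 0")
    case True
    then have "beta = 0" using g3 by simp
    then show False using g2 True n by auto
  next
    case False
    then have g0: "2*(-1 + 2*beta*eta - beta^2) + 1 - alpha*eta = 0" using g5 by simp
    have g: "alpha*eta = -1 + 4*beta*eta - 2*beta^2" using g0 by algebra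
    from n show False
    proof
      assume e: "eta = 1"
      define t where "t = beta - 1"
      have a: "alpha = 1 - 2*t^2" using g e t_def by algebra
      have t3: "2*t^3 = 1" using g2 e a t_def by algebra
      have "alpha = 1" using g3 e a t3 t_def by algebra
      then show False using a t3 by simp
    next
      assume e: "eta = -1"
      define t where "t = beta + 1"
      have a: "alpha = 2*t^2 - 1" using g e t_def by algebra
      have t3: "2*t^3 = -1" using g2 e a t_def by algebra
      have "alpha = -1" using g3 e a t3 t_def by algebra
      then show False using a t3 by simp
    qed
  qed
qed

theorem theorem4p9:
  fixes alpha beta eta :: real
  assumes "eta = 1 \<or> eta = -1"
  shows "\<not> (\<exists>lam0 c. algebraic_schouten_soliton (g4_bracket alpha beta eta)
                 (conn1 (g4_bracket alpha beta eta)) lam0 c)"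
proof
  assume "\<exists>lam0 c. algebraic_schouten_soliton (g4_bracket alpha beta eta)
                 (conn1 (g4_bracket alpha beta eta)) lam0 c"
  then obtain lam0 c D where der: "is_derivation (g4_bracket alpha beta eta) D"
    and H: "\<And>X. ric_op (g4_bracket alpha beta eta) (conn1 (g4_bracket alpha beta eta)) X
        = (scal (g4_bracket alpha beta eta) (conn1 (g4_bracket alpha beta eta)) * lam0 + c) *\<^sub>R X + D X"
    unfolding algebraic_schouten_soliton_def by blast
  define k where "k = scal (g4_bracket alpha beta eta) (conn1 (g4_bracket alpha beta eta)) * lam0 + c"
  define br where "br = g4_bracket alpha beta eta"
  have lin: "linear D" and dr: "\<And>X Y. D (br X Y) = br (D X) Y + br X (D Y)"
    using der unfolding is_derivation_def br_def by auto
  have DX: "D X = ric_op br (conn1 br) X - k *\<^sub>R X" for X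
    using H[of X] unfolding k_def br_def by simp
  have d1: "D (e 1) = (\<chi> i. if i = 1 then -1 + 2*beta*eta - beta^2 - k else 0)"
    unfolding DX br_def ric_c vec_eq_iff forall_3 by (simp add: e_comp)
  have d2: "D (e 2) = (\<chi> i. if i = 1 then 0 else if i = 2 then -1 + 2*alpha*eta - alpha*beta - k else -alpha/2)"
    unfolding DX br_def ric_c vec_eq_iff forall_3 by (simp add: e_comp)
  have d3: "D (e 3) = (\<chi> i. if i = 2 then alpha/2 else if i = 3 then -k else 0)"
    unfolding DX br_def ric_c vec_eq_iff forall_3 by (simp add: e_comp)
  have b12: "br (e 1) (e 2) = (-1) *\<^sub>R e 2 + (2*eta - beta) *\<^sub>R e 3"
    unfolding br_def vec_eq_iff forall_3 by (simp add: br_comp e_comp)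
  have b13: "br (e 1) (e 3) = (-beta) *\<^sub>R e 2 + e 3"
    unfolding br_def vec_eq_iff forall_3 by (simp add: br_comp e_comp)
  have b23: "br (e 2) (e 3) = alpha *\<^sub>R e 1"
    unfolding br_def vec_eq_iff forall_3 by (simp add: br_comp e_comp)
  have l12: "D (br (e 1) (e 2)) = (-1) *\<^sub>R D (e 2) + (2*eta - beta) *\<^sub>R D (e 3)"
    unfolding b12 by (simp only: linear_add[OF lin] linear_scale[OF lin])
  have l13: "D (br (e 1) (e 3)) = (-beta) *\<^sub>R D (e 2) + D (e 3)"
    unfolding b13 by (simp only: linear_add[OF lin] linear_scale[OF lin])
  have l23: "D (br (e 2) (e 3)) = alpha *\<^sub>R D (e 1)"
    unfolding b23 by (simp only: linear_scale[OF lin])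
  have E12: "(-1) *\<^sub>R D (e 2) + (2*eta - beta) *\<^sub>R D (e 3) = br (D (e 1)) (e 2) + br (e 1) (D (e 2))"
    using dr[of "e 1" "e 2"] l12 by simp
  have E13: "(-beta) *\<^sub>R D (e 2) + D (e 3) = br (D (e 1)) (e 3) + br (e 1) (D (e 3))"
    using dr[of "e 1" "e 3"] l13 by simp
  have E23: "alpha *\<^sub>R D (e 1) = br (D (e 2)) (e 3) + br (e 2) (D (e 3))"
    using dr[of "e 2" "e 3"] l23 by simp
  have q12: "((-1) *\<^sub>R D (e 2) + (2*eta - beta) *\<^sub>R D (e 3)) $ 2 = (br (D (e 1)) (e 2) + br (e 1) (D (e 2))) $ 2"
     "((-1) *\<^sub>R D (e 2) + (2*eta - beta) *\<^sub>R D (e 3)) $ 3 = (br (D (e 1)) (e 2) + br (e 1) (D (e 2))) $ 3"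
    by (simp only: E12)+
  have q13: "((-beta) *\<^sub>R D (e 2) + D (e 3)) $ 2 = (br (D (e 1)) (e 3) + br (e 1) (D (e 3))) $ 2"
     "((-beta) *\<^sub>R D (e 2) + D (e 3)) $ 3 = (br (D (e 1)) (e 3) + br (e 1) (D (e 3))) $ 3"
    by (simp only: E13)+
  have q23: "(alpha *\<^sub>R D (e 1)) $ 1 = (br (D (e 2)) (e 3) + br (e 2) (D (e 3))) $ 1"
    by (simp only: E23)
  show False
    using q12 q13 q23 unfolding d1 d2 d3 br_def
    apply (simp add: br_comp e_comp)
    apply (rule key[OF assms])
       apply assumption+
    done
qed

end
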